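(* Let $\delta,\alpha\geq0$, $\theta\in[0,\alpha]$, $\sigma\in\mathbb{R}$, $\varepsilon\in(0,1)$, and let $\widehat{v}(t,\xi)$ solve $(1+|\xi|^{2\delta})\widehat{v}_{tt}+|\xi|^{2\theta}\widehat{v}_t+|\xi|^{2\alpha}\widehat{v}=0$. Define, for $|\xi|\geq\varepsilon$, $$\rho(\xi)=\begin{cases}\dfrac{\varepsilon^{2\alpha+2\delta-4\theta}|\xi|^{2\theta}}{2(1+|\xi|^{2\delta})}&\text{if }\alpha+\delta\geq2\theta,\\[2mm] \dfrac{\varepsilon^{-2\alpha+4\theta}|\xi|^{2\alpha-2\theta}}{4}&\text{if }\alpha+\delta<2\theta,\end{cases}$$ $$E(t,\xi)=\tfrac12(1+|\xi|^{2\delta})|\xi|^\sigma|\widehat{v}_t|^2+\tfrac12|\xi|^{2\alpha+\sigma}|\widehat{v}|^2+\rho(\xi)(1+|\xi|^{2\delta})|\xi|^\sigma\,\mathrm{Re}\{\widehat{v}_t\overline{\widehat{v}}\}+\tfrac12\rho(\xi)|\xi|^{2\theta+\sigma}|\widehat{v}|^2,$$ $$E_1(t,\xi)=\tfrac12|\xi|^{2\delta+\sigma}|\widehat{v}_t|^2+\tfrac12|\xi|^{2\alpha+\sigma}|\widehat{v}|^2.$$ Then $E$ and $E_1$ are equivalent for all $t\geq0$ and $|\xi|\geq\varepsilon$: there are constants $m,M>0$ independent of $t,\xi$ with $mE_1(t,\xi)\leq E(t,\xi)\leq ME_1(t,\xi)$.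
   Context: $\widehat{v}$, $\widehat{v}_t$ are evaluated at $(t,\xi)$; the bar denotes complex conjugation. *)

theory Defs
  imports "HOL-Analysis.Analysis"
begin

definition rho :: "real \<Rightarrow> real \<Rightarrow> real \<Rightarrow> real \<Rightarrow> real \<Rightarrow> real" where
  "rho \<delta> \<alpha> \<theta> \<epsilon> r =
     (if \<alpha> + \<delta> \<ge> 2 * \<theta>
      then \<epsilon> powr (2*\<alpha> + 2*\<delta> - 4*\<theta>) * r powr (2*\<theta>) / (2 * (1 + r powr (2*\<delta>)))
      else \<epsilon> powr (- 2*\<alpha> + 4*\<theta>) * r powr (2*\<alpha> - 2*\<theta>) / 4)"

text \<open>Energy E at a point, given r = |xi|, vt = v_t(t,xi), w = v(t,xi).\<close>
definition energyE :: "real \<Rightarrow> real \<Rightarrow> real \<Rightarrow> real \<Rightarrow> real \<Rightarrow> real \<Rightarrow> complex \<Rightarrow> complex \<Rightarrow> real" where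
  "energyE \<delta> \<alpha> \<theta> \<sigma> \<epsilon> r vt w =
     1/2 * (1 + r powr (2*\<delta>)) * r powr \<sigma> * (cmod vt)^2
   + 1/2 * r powr (2*\<alpha> + \<sigma>) * (cmod w)^2
   + rho \<delta> \<alpha> \<theta> \<epsilon> r * (1 + r powr (2*\<delta>)) * r powr \<sigma> * Re (vt * cnj w)
   + 1/2 * rho \<delta> \<alpha> \<theta> \<epsilon> r * r powr (2*\<theta> + \<sigma>) * (cmod w)^2"

definition energyE1 :: "real \<Rightarrow> real \<Rightarrow> real \<Rightarrow> real \<Rightarrow> complex \<Rightarrow> complex \<Rightarrow> real" where
  "energyE1 \<delta> \<alpha> \<sigma> r vt w =
     1/2 * r powr (2*\<delta> + \<sigma>) * (cmod vt)^2 + 1/2 * r powr (2*\<alpha> + \<sigma>) * (cmod w)^2"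

end

theory Submission
  imports Defs
begin

lemma core:
  fixes sc R D A T \<rho> K a b p :: real
  assumes "sc>0" "0\<le>R" "R \<le> D" "D \<le> K*R" "K \<ge> 1" "0\<le>A" "0\<le>T" "0\<le>\<rho>"
    "\<rho>^2*D \<le> A/4" "\<rho>*T \<le> A/2" "a\<ge>0" "b\<ge>0" "\<bar>p\<bar> \<le> a*b"
  shows "(1/2)*(1/2*(R * sc)*a^2+1/2*(A * sc)*b^2) \<le> 1/2*D * sc*a^2 + 1/2*(A * sc)*b^2 + \<rho>*D * sc*p + 1/2*\<rho>*(T * sc)*b^2"
   and "1/2*D * sc*a^2 + 1/2*(A * sc)*b^2 + \<rho>*D * sc*p + 1/2*\<rho>*(T * sc)*b^2 \<le> (2*K)*(1/2*(R * sc)*a^2+1/2*(A * sc)*b^2)"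
proof -
  have D0: "D \<ge> 0" using assms by linarith
  have sq: "D*(a/2 - \<rho>*b)^2 \<ge> 0" using D0 by simp
  have k1: "\<rho>*D*(a*b) \<le> (D*a^2)/4 + \<rho>^2*D*b^2" using sq by (simp add: power2_eq_square algebra_simps)
  have k2: "\<rho>^2*D*b^2 \<le> (A*b^2)/4" using mult_right_mono[OF assms(9), of "b^2"] by simp
  have k3: "\<bar>\<rho>*D*p\<bar> \<le> \<rho>*D*(a*b)" using assms D0 by (simp add: abs_mult mult_left_mono)
  hence k3': "- (\<rho>*D*(a*b)) \<le> \<rho>*D*p" "\<rho>*D*p \<le> \<rho>*D*(a*b)" by linarith+
  have k4: "\<rho>*T*b^2 \<le> (A*b^2)/2" using mult_right_mono[OF assms(10), of "b^2"] by simp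
  have k5: "D*a^2 \<le> K*(R*a^2)" using mult_right_mono[OF assms(4), of "a^2"] by simp
  have k6: "R*a^2 \<le> D*a^2" using mult_right_mono[OF assms(3), of "a^2"] by simp
  have k7: "0 \<le> \<rho>*T*b^2" using assms by simp
  have k8: "A*b^2 \<le> K*(A*b^2)" using mult_right_mono[OF assms(5), of "A*b^2"] assms by simp
  have k9: "0 \<le> R*a^2" using assms by simp
  have L: "(R*a^2)/4 + (A*b^2)/4 \<le> (D*a^2)/2 + (A*b^2)/2 + \<rho>*D*p + (\<rho>*T*b^2)/2"
    using k1 k2 k3' k6 k7 by linarith
  have U: "(D*a^2)/2 + (A*b^2)/2 + \<rho>*D*p + (\<rho>*T*b^2)/2 \<le> K*(R*a^2) + K*(A*b^2)"
    using k1 k2 k3' k4 k5 k8 k6 k9 by linarith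
  show "(1/2)*(1/2*(R * sc)*a^2+1/2*(A * sc)*b^2) \<le> 1/2*D * sc*a^2 + 1/2*(A * sc)*b^2 + \<rho>*D * sc*p + 1/2*\<rho>*(T * sc)*b^2"
    using mult_right_mono[OF L, of sc] assms(1) by (simp add: algebra_simps)
  show "1/2*D * sc*a^2 + 1/2*(A * sc)*b^2 + \<rho>*D * sc*p + 1/2*\<rho>*(T * sc)*b^2 \<le> (2*K)*(1/2*(R * sc)*a^2+1/2*(A * sc)*b^2)"
    using mult_right_mono[OF U, of sc] assms(1) by (simp add: algebra_simps)
qed

lemma rho_bounds:
  fixes \<delta> \<alpha> \<theta> \<epsilon> r :: real
  assumes "\<delta> \<ge> 0" and "\<alpha> \<ge> 0" and "0 \<le> \<theta>" and "\<theta> \<le> \<alpha>"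
    and "0 < \<epsilon>" and "\<epsilon> < 1" and "\<epsilon> \<le> r"
  shows "rho \<delta> \<alpha> \<theta> \<epsilon> r \<ge> 0"
    and "(rho \<delta> \<alpha> \<theta> \<epsilon> r)^2 * (1 + r powr (2*\<delta>)) \<le> r powr (2*\<alpha>) / 4"
    and "rho \<delta> \<alpha> \<theta> \<epsilon> r * r powr (2*\<theta>) \<le> r powr (2*\<alpha>) / 2"
proof -
  have r0: "r > 0" using assms by linarith
  define R where "R = r powr (2*\<delta>)"
  define A where "A = r powr (2*\<alpha>)"
  define T where "T = r powr (2*\<theta>)"
  define D where "D = 1 + R"
  have R0: "R \<ge> 0" "A > 0" "T > 0" using r0 by (auto simp: R_def A_def T_def)
  have D0: "D > 0" using R0 by (simp add: D_def)
  have "rho \<delta> \<alpha> \<theta> \<epsilon> r \<ge> 0 \<and> (rho \<delta> \<alpha> \<theta> \<epsilon> r)^2 * D \<le> A / 4 \<and> rho \<delta> \<alpha> \<theta> \<epsilon> r * T \<le> A / 2"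
  proof (cases "\<alpha> + \<delta> \<ge> 2 * \<theta>")
    case True
    define e where "e = 2*\<alpha> + 2*\<delta> - 4*\<theta>"
    define x where "x = \<epsilon> powr e"
    have e0: "e \<ge> 0" using True by (simp add: e_def)
    have x0: "0 \<le> x" "x \<le> 1" using assms e0 by (auto simp: x_def intro: powr_le1)
    have xr: "x \<le> r powr e" unfolding x_def using powr_mono2[OF e0] assms by simp
    have TT: "r powr e * T^2 = R * A" unfolding T_def R_def A_def e_def
      using r0 by (simp add: power2_eq_square flip: powr_add) (simp add: algebra_simps)
    define y where "y = x * T^2"
    have y0: "0 \<le> y" using x0 by (simp add: y_def)
    have yRA: "y \<le> R * A" unfolding y_def using xr TT by (metis mult_right_mono zero_le_power2)
    have yDA: "y \<le> D * A" using yRA R0 by (simp add: D_def algebra_simps)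
    have rho_eq: "rho \<delta> \<alpha> \<theta> \<epsilon> r = x * T / (2*D)"
      using True by (simp add: rho_def x_def e_def D_def R_def T_def)
    have a1: "x * T / (2*D) * T = y / (2*D)" by (simp add: y_def power2_eq_square)
    have a2: "(x * T / (2*D))^2 * D = x * y / (4*D)" using D0
      by (simp add: y_def power2_eq_square field_simps)
    have b1: "y / (2*D) \<le> A/2" using yDA D0 by (simp add: field_simps)
    have b2: "x * y / (4*D) \<le> A/4"
    proof -
      have "x * y \<le> 1 * y" using x0 y0 by (intro mult_right_mono) auto
      hence "x * y \<le> D * A" using yDA by simp
      thus ?thesis using D0 by (simp add: field_simps)
    qed
    show ?thesis using rho_eq a1 a2 b1 b2 x0 R0 D0 by simp
  next
    case False
    define y where "y = \<epsilon> powr (4*\<theta> - 2*\<alpha>)"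
    define P where "P = r powr (2*\<alpha> - 2*\<theta>)"
    have y0: "0 \<le> y" "y \<le> 1" using assms False by (auto simp: y_def intro: powr_le1)
    have rho_eq: "rho \<delta> \<alpha> \<theta> \<epsilon> r = y * P / 4"
      using False by (simp add: rho_def y_def P_def)
    have PT: "P * T = A" unfolding P_def T_def A_def using r0 by (simp flip: powr_add)
    have P0: "P > 0" using r0 by (simp add: P_def)
    have c1: "y^2 * P^2 \<le> A"
    proof -
      have "r powr (2*\<alpha> - 4*\<theta>) \<le> \<epsilon> powr (2*\<alpha> - 4*\<theta>)"
        using powr_mono2'[of "2*\<alpha> - 4*\<theta>" \<epsilon> r] assms False by simp
      hence "y^2 * r powr (2*\<alpha> - 4*\<theta>) \<le> y^2 * \<epsilon> powr (2*\<alpha> - 4*\<theta>)"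
        by (simp add: mult_left_mono)
      also have "y^2 * \<epsilon> powr (2*\<alpha> - 4*\<theta>) = \<epsilon> powr (4*\<theta> - 2*\<alpha>)"
        unfolding y_def using assms by (simp add: power2_eq_square flip: powr_add)
      also have "\<dots> \<le> 1" using assms False by (intro powr_le1) auto
      finally have h: "y^2 * r powr (2*\<alpha> - 4*\<theta>) \<le> 1" .
      have "P^2 = A * r powr (2*\<alpha> - 4*\<theta>)" unfolding P_def A_def using r0
        by (simp add: power2_eq_square flip: powr_add)
      hence "y^2 * P^2 = A * (y^2 * r powr (2*\<alpha> - 4*\<theta>))" by simp
      also have "\<dots> \<le> A * 1" using h R0 by (intro mult_left_mono) auto
      finally show ?thesis by simp
    qed
    have c2: "y^2 * P^2 * R \<le> A"
    proof -
      have "r powr (2*\<alpha> - 4*\<theta> + 2*\<delta>) \<le> \<epsilon> powr (2*\<alpha> - 4*\<theta> + 2*\<delta>)"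
        using powr_mono2'[of "2*\<alpha> - 4*\<theta> + 2*\<delta>" \<epsilon> r] assms False by simp
      hence "y^2 * r powr (2*\<alpha> - 4*\<theta> + 2*\<delta>) \<le> y^2 * \<epsilon> powr (2*\<alpha> - 4*\<theta> + 2*\<delta>)"
        by (simp add: mult_left_mono)
      also have "y^2 * \<epsilon> powr (2*\<alpha> - 4*\<theta> + 2*\<delta>) = \<epsilon> powr (4*\<theta> - 2*\<alpha> + 2*\<delta>)"
        unfolding y_def using assms by (simp add: power2_eq_square flip: powr_add) (simp add: algebra_simps)
      also have "\<dots> \<le> 1" using assms False by (intro powr_le1) auto
      finally have h: "y^2 * r powr (2*\<alpha> - 4*\<theta> + 2*\<delta>) \<le> 1" .
      have "P^2 * R = A * r powr (2*\<alpha> - 4*\<theta> + 2*\<delta>)" unfolding P_def A_def R_def using r0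
        by (simp add: power2_eq_square flip: powr_add) (simp add: algebra_simps)
      hence "y^2 * P^2 * R = A * (y^2 * r powr (2*\<alpha> - 4*\<theta> + 2*\<delta>))" by (simp add: algebra_simps)
      also have "\<dots> \<le> A * 1" using h R0 by (intro mult_left_mono) auto
      finally show ?thesis by simp
    qed
    have d1: "(y * P / 4)^2 * D = (y^2*P^2 + y^2*P^2*R) / 16"
      by (simp add: D_def power2_eq_square field_simps)
    have d2: "y * P / 4 * T = y * A / 4" using PT by (metis mult.assoc times_divide_eq_left mult.commute)
    have d3: "y * A / 4 \<le> A / 2" proof -
      have "y * A \<le> 1 * A" using y0 R0 by (intro mult_right_mono) auto
      thus ?thesis using R0 by simp
    qed
    have d4: "0 \<le> y * P / 4" using y0 P0 by simp
    have d5: "(y^2*P^2 + y^2*P^2*R) / 16 \<le> A / 4" using c1 c2 R0 unfolding add_divide_distrib by linarith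
    show ?thesis unfolding rho_eq d1 d2 using d3 d4 d5 by blast
  qed
  thus "rho \<delta> \<alpha> \<theta> \<epsilon> r \<ge> 0"
    and "(rho \<delta> \<alpha> \<theta> \<epsilon> r)^2 * (1 + r powr (2*\<delta>)) \<le> r powr (2*\<alpha>) / 4"
    and "rho \<delta> \<alpha> \<theta> \<epsilon> r * r powr (2*\<theta>) \<le> r powr (2*\<alpha>) / 2"
    by (simp_all add: D_def R_def A_def T_def)
qed


theorem lemma3p2:
  fixes \<delta> \<alpha> \<theta> \<sigma> \<epsilon> :: real
  assumes "\<delta> \<ge> 0" and "\<alpha> \<ge> 0" and "0 \<le> \<theta>" and "\<theta> \<le> \<alpha>"
    and "0 < \<epsilon>" and "\<epsilon> < 1"
  shows "\<exists>m M. m > 0 \<and> M > 0 \<and>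
    (\<forall>(v :: real \<Rightarrow> 'a::euclidean_space \<Rightarrow> complex) vt vtt.
       ((\<forall>\<xi> t. t \<ge> 0 \<longrightarrow>
            ((\<lambda>s. v s \<xi>) has_vector_derivative vt t \<xi>) (at t within {0..}) \<and>
            ((\<lambda>s. vt s \<xi>) has_vector_derivative vtt t \<xi>) (at t within {0..}) \<and>
            complex_of_real (1 + norm \<xi> powr (2*\<delta>)) * vtt t \<xi>
              + complex_of_real (norm \<xi> powr (2*\<theta>)) * vt t \<xi>
              + complex_of_real (norm \<xi> powr (2*\<alpha>)) * v t \<xi> = 0))
       \<longrightarrow> (\<forall>t \<ge> 0. \<forall>\<xi>. norm \<xi> \<ge> \<epsilon> \<longrightarrow>
             m * energyE1 \<delta> \<alpha> \<sigma> (norm \<xi>) (vt t \<xi>) (v t \<xi>)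
               \<le> energyE \<delta> \<alpha> \<theta> \<sigma> \<epsilon> (norm \<xi>) (vt t \<xi>) (v t \<xi>) \<and>
             energyE \<delta> \<alpha> \<theta> \<sigma> \<epsilon> (norm \<xi>) (vt t \<xi>) (v t \<xi>)
               \<le> M * energyE1 \<delta> \<alpha> \<sigma> (norm \<xi>) (vt t \<xi>) (v t \<xi>)))"
  proof -
  define K where "K = 1 + \<epsilon> powr (-2*\<delta>)"
  have K1: "K \<ge> 1" by (simp add: K_def)
  show ?thesis
  proof (rule exI[of _ "1/2"], rule exI[of _ "2*K"], intro conjI allI impI)
    show "(0::real) < 1/2" by simp
    show "0 < 2*K" using K1 by simp
  next
    fix v :: "real \<Rightarrow> 'a \<Rightarrow> complex" and vt vtt :: "real \<Rightarrow> 'a \<Rightarrow> complex" and t :: real and \<xi> :: 'a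
    assume "\<epsilon> \<le> norm \<xi>"
    define r where "r = norm \<xi>"
    have er: "\<epsilon> \<le> r" using \<open>\<epsilon> \<le> norm \<xi>\<close> by (simp add: r_def)
    have r0: "r > 0" using er assms by linarith
    note rb = rho_bounds[OF assms er]
    define R where "R = r powr (2*\<delta>)"
    have KR: "1 + R \<le> K * R"
    proof -
      have "\<epsilon> powr (2*\<delta>) \<le> r powr (2*\<delta>)" using powr_mono2[of "2*\<delta>" \<epsilon> r] assms er by simp
      hence "\<epsilon> powr (-2*\<delta>) * \<epsilon> powr (2*\<delta>) \<le> \<epsilon> powr (-2*\<delta>) * R"
        by (simp add: R_def mult_left_mono)
      moreover have "\<epsilon> powr (-2*\<delta>) * \<epsilon> powr (2*\<delta>) = 1" using assms by (simp flip: powr_add)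
      ultimately show ?thesis by (simp add: K_def algebra_simps)
    qed
    have Re_le: "\<bar>Re (vt t \<xi> * cnj (v t \<xi>))\<bar> \<le> cmod (vt t \<xi>) * cmod (v t \<xi>)"
      using abs_Re_le_cmod[of "vt t \<xi> * cnj (v t \<xi>)"] by (simp add: norm_mult)
    have pa: "r powr (2*\<delta> + \<sigma>) = R * r powr \<sigma>" "r powr (2*\<alpha> + \<sigma>) = r powr (2*\<alpha>) * r powr \<sigma>"
      "r powr (2*\<theta> + \<sigma>) = r powr (2*\<theta>) * r powr \<sigma>"
      using r0 by (simp_all add: R_def powr_add)
    note c = core[of "r powr \<sigma>" R "1 + R" K "r powr (2*\<alpha>)" "r powr (2*\<theta>)" "rho \<delta> \<alpha> \<theta> \<epsilon> r"
        "cmod (vt t \<xi>)" "cmod (v t \<xi>)" "Re (vt t \<xi> * cnj (v t \<xi>))"]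
    have hyps: "r powr \<sigma> > 0" "0 \<le> R" "R \<le> 1 + R" "1 + R \<le> K * R" "1 \<le> K"
      "0 \<le> r powr (2*\<alpha>)" "0 \<le> r powr (2*\<theta>)" "0 \<le> rho \<delta> \<alpha> \<theta> \<epsilon> r"
      "(rho \<delta> \<alpha> \<theta> \<epsilon> r)^2 * (1 + R) \<le> r powr (2*\<alpha>) / 4"
      "rho \<delta> \<alpha> \<theta> \<epsilon> r * r powr (2*\<theta>) \<le> r powr (2*\<alpha>) / 2"
      using r0 KR K1 rb by (auto simp: R_def)
    show "1/2 * energyE1 \<delta> \<alpha> \<sigma> (norm \<xi>) (vt t \<xi>) (v t \<xi>)
               \<le> energyE \<delta> \<alpha> \<theta> \<sigma> \<epsilon> (norm \<xi>) (vt t \<xi>) (v t \<xi>)"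
      unfolding energyE_def energyE1_def r_def[symmetric] pa R_def[symmetric]
      by (rule c(1)[OF hyps norm_ge_zero norm_ge_zero Re_le])
    show "energyE \<delta> \<alpha> \<theta> \<sigma> \<epsilon> (norm \<xi>) (vt t \<xi>) (v t \<xi>)
               \<le> 2*K * energyE1 \<delta> \<alpha> \<sigma> (norm \<xi>) (vt t \<xi>) (v t \<xi>)"
      unfolding energyE_def energyE1_def r_def[symmetric] pa R_def[symmetric]
      by (rule c(2)[OF hyps norm_ge_zero norm_ge_zero Re_le])
  qed
qed

end
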